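(* Let $P$ and $Q$ be stochastic matrices over a countable set $\Omega$. Say that $P$ and $Q$ satisfy condition $(\star)$ via a permutation $\sigma$ of $\Omega$ if (a) for all $i,j$, $P_{ij}>0\iff Q_{\sigma(i)\sigma(j)}>0$, and (b) for all $n,m\in\mathbb{N}$ and all $i,j,k\in\Omega$ with $P^{(n)}_{ij}P^{(m)}_{jk}>0$, $$\frac{P^{(n)}_{ij}P^{(m)}_{jk}}{P^{(n+m)}_{ik}}=\frac{Q^{(n)}_{\sigma(i)\sigma(j)}Q^{(m)}_{\sigma(j)\sigma(k)}}{Q^{(n+m)}_{\sigma(i)\sigma(k)}}.$$ Then: (1) if there is a $\rho$-unitary isomorphism $Arv(P)\to Arv(Q)$ for a *-automorphism $\rho$ of $\ell^\infty(\Omega)$, then $P$ and $Q$ satisfy $(\star)$ via $\sigma_\rho$; (2) if $P$ and $Q$ satisfy $(\star)$ via $\sigma$, then there is a $\rho_\sigma$-unitary isomorphism $Arv(P)\to Arv(Q)$.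
   Context: A stochastic matrix over $\Omega$ has nonnegative entries and row sums $1$; $P^{(n)}_{ij}$ is the $(i,j)$ entry of $P^n$ ($P^0=I$). Every *-automorphism $\rho$ of $\ell^\infty(\Omega)$ is of the form $\rho_\sigma(f)=f\circ\sigma^{-1}$ for a unique permutation $\sigma$; $\sigma_\rho$ denotes the permutation with $\rho(p_j)=p_{\sigma_\rho(j)}$, $p_j$ the indicator of $\{j\}$. $Arv(P)$: $Arv(P)_0=\ell^\infty(\Omega)$; $Arv(P)_n$ ($n\ge1$) is the set of complex $\Omega\times\Omega$ matrices $A=[a_{ij}]$ with $a_{ij}=0$ whenever $P^{(n)}_{ij}=0$ and $\sup_j\sum_i|a_{ij}|^2<\infty$, a W*-correspondence over $\ell^\infty(\Omega)$ with actions by multiplication by diagonal matrices and inner product $\mathrm{Diag}(A^*B)$; $U^P_{n,m}(A\otimes B)=(\sqrt{P^{n+m}})^{\flat}*[(\sqrt{P^n}*A)(\sqrt{P^m}*B)]$ for $n,m\ge1$ ($*$ entrywise product, $\sqrt\cdot$ entrywise, $M^\flat_{ik}=M_{ik}^{-1}$ if $M_{ik}>0$, else $0$), $U_{0,n},U_{n,0}$ module actions. A $\rho$-unitary isomorphism $V:Arv(P)\to Arv(Q)$ is a family $(V_n)_{n\ge0}$ with $V_0=\rho$ and, for $n\ge1$, $V_n:Arv(P)_n\to Arv(Q)_n$ surjective linear with $V_n(a\xi b)=\rho(a)V_n(\xi)\rho(b)$ and $\rho^{-1}(\langle V_n\xi,V_n\eta\rangle)=\langle\xi,\eta\rangle$,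 such that $V_{n+m}U^P_{n,m}=U^Q_{n,m}(V_n\otimes V_m)$ for all $n,m$. *)

theory Defs
  imports "HOL-Analysis.Analysis"
begin

definition stochastic :: "('a \<Rightarrow> 'a \<Rightarrow> real) \<Rightarrow> bool" where
  "stochastic P \<longleftrightarrow> (\<forall>i j. P i j \<ge> 0) \<and> (\<forall>i. ((\<lambda>j. P i j) has_sum 1) UNIV)"

fun mpow :: "('a \<Rightarrow> 'a \<Rightarrow> real) \<Rightarrow> nat \<Rightarrow> 'a \<Rightarrow> 'a \<Rightarrow> real" where
  "mpow P 0 = (\<lambda>i j. if i = j then 1 else 0)"
| "mpow P (Suc n) = (\<lambda>i k. infsum (\<lambda>j. mpow P n i j * P j k) UNIV)"

definition linf :: "('a \<Rightarrow> complex) set" where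
  "linf = {f. bdd_above (range (\<lambda>x. cmod (f x)))}"

definition star_aut :: "(('a \<Rightarrow> complex) \<Rightarrow> ('a \<Rightarrow> complex)) \<Rightarrow> bool" where
  "star_aut \<rho> \<longleftrightarrow> bij_betw \<rho> linf linf
     \<and> (\<forall>f\<in>linf. \<forall>g\<in>linf. \<rho> (\<lambda>x. f x + g x) = (\<lambda>x. \<rho> f x + \<rho> g x))
     \<and> (\<forall>f\<in>linf. \<forall>c. \<rho> (\<lambda>x. c * f x) = (\<lambda>x. c * \<rho> f x))
     \<and> (\<forall>f\<in>linf. \<forall>g\<in>linf. \<rho> (\<lambda>x. f x * g x) = (\<lambda>x. \<rho> f x * \<rho> g x))
     \<and> (\<forall>f\<in>linf. \<rho> (\<lambda>x. cnj (f x)) = (\<lambda>x. cnj (\<rho> f x)))"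

definition pj :: "'a \<Rightarrow> 'a \<Rightarrow> complex" where
  "pj j = (\<lambda>x. if x = j then 1 else 0)"

definition sigma_of :: "(('a \<Rightarrow> complex) \<Rightarrow> ('a \<Rightarrow> complex)) \<Rightarrow> 'a \<Rightarrow> 'a" where
  "sigma_of \<rho> j = (THE k. \<rho> (pj j) = pj k)"

definition rho_of :: "('a \<Rightarrow> 'a) \<Rightarrow> ('a \<Rightarrow> complex) \<Rightarrow> ('a \<Rightarrow> complex)" where
  "rho_of \<sigma> f = f \<circ> inv \<sigma>"

definition star_cond :: "('a \<Rightarrow> 'a \<Rightarrow> real) \<Rightarrow> ('a \<Rightarrow> 'a \<Rightarrow> real) \<Rightarrow> ('a \<Rightarrow> 'a) \<Rightarrow> bool" where
  "star_cond P Q \<sigma> \<longleftrightarrow> bij \<sigma>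
     \<and> (\<forall>i j. P i j > 0 \<longleftrightarrow> Q (\<sigma> i) (\<sigma> j) > 0)
     \<and> (\<forall>n m i j k. mpow P n i j * mpow P m j k > 0 \<longrightarrow>
          mpow P n i j * mpow P m j k / mpow P (n + m) i k =
          mpow Q n (\<sigma> i) (\<sigma> j) * mpow Q m (\<sigma> j) (\<sigma> k) / mpow Q (n + m) (\<sigma> i) (\<sigma> k))"

text \<open>The fibre Arv(P)_n for n >= 1.\<close>
definition arv :: "('a \<Rightarrow> 'a \<Rightarrow> real) \<Rightarrow> nat \<Rightarrow> ('a \<Rightarrow> 'a \<Rightarrow> complex) set" where
  "arv P n = {A. (\<forall>i j. mpow P n i j = 0 \<longrightarrow> A i j = 0)
      \<and> (\<forall>j. (\<lambda>i. (cmod (A i j))\<^sup>2) summable_on UNIV)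
      \<and> bdd_above (range (\<lambda>j. infsum (\<lambda>i. (cmod (A i j))\<^sup>2) UNIV))}"

text \<open>Bimodule action a xi b = Diag(a) xi Diag(b).\<close>
definition bimod :: "('a \<Rightarrow> complex) \<Rightarrow> ('a \<Rightarrow> 'a \<Rightarrow> complex) \<Rightarrow> ('a \<Rightarrow> complex) \<Rightarrow> ('a \<Rightarrow> 'a \<Rightarrow> complex)" where
  "bimod a A b = (\<lambda>i j. a i * A i j * b j)"

text \<open>Inner product Diag(A^* B).\<close>
definition arv_ip :: "('a \<Rightarrow> 'a \<Rightarrow> complex) \<Rightarrow> ('a \<Rightarrow> 'a \<Rightarrow> complex) \<Rightarrow> ('a \<Rightarrow> complex)" where
  "arv_ip A B = (\<lambda>j. infsum (\<lambda>i. cnj (A i j) * B i j) UNIV)"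

definition flat :: "real \<Rightarrow> real" where
  "flat x = (if x > 0 then 1 / x else 0)"

definition Umap :: "('a \<Rightarrow> 'a \<Rightarrow> real) \<Rightarrow> nat \<Rightarrow> nat \<Rightarrow> ('a \<Rightarrow> 'a \<Rightarrow> complex) \<Rightarrow> ('a \<Rightarrow> 'a \<Rightarrow> complex) \<Rightarrow> ('a \<Rightarrow> 'a \<Rightarrow> complex)" where
  "Umap P n m A B = (\<lambda>i k. complex_of_real (flat (sqrt (mpow P (n + m) i k))) *
      infsum (\<lambda>j. (complex_of_real (sqrt (mpow P n i j)) * A i j) *
                  (complex_of_real (sqrt (mpow P m j k)) * B j k)) UNIV)"

text \<open>rho-unitary isomorphism Arv(P) -> Arv(Q): V_0 = rho, V n for n >= 1.
  The compatibility with U is required on elementary tensors (which determine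
  the maps on the interior tensor product); the cases n = 0 or m = 0 are the
  bimodule property and multiplicativity of rho.\<close>
definition rho_unitary_iso :: "('a \<Rightarrow> 'a \<Rightarrow> real) \<Rightarrow> ('a \<Rightarrow> 'a \<Rightarrow> real) \<Rightarrow>
    (('a \<Rightarrow> complex) \<Rightarrow> ('a \<Rightarrow> complex)) \<Rightarrow>
    (nat \<Rightarrow> ('a \<Rightarrow> 'a \<Rightarrow> complex) \<Rightarrow> ('a \<Rightarrow> 'a \<Rightarrow> complex)) \<Rightarrow> bool" where
  "rho_unitary_iso P Q \<rho> V \<longleftrightarrow>
     (\<forall>n\<ge>1.
        V n ` arv P n = arv Q n
      \<and> (\<forall>A\<in>arv P n. \<forall>B\<in>arv P n. V n (\<lambda>i j. A i j + B i j) = (\<lambda>i j. V n A i j + V n B i j))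
      \<and> (\<forall>A\<in>arv P n. \<forall>c. V n (\<lambda>i j. c * A i j) = (\<lambda>i j. c * V n A i j))
      \<and> (\<forall>a\<in>linf. \<forall>b\<in>linf. \<forall>A\<in>arv P n. V n (bimod a A b) = bimod (\<rho> a) (V n A) (\<rho> b))
      \<and> (\<forall>A\<in>arv P n. \<forall>B\<in>arv P n. inv_into linf \<rho> (arv_ip (V n A) (V n B)) = arv_ip A B))
   \<and> (\<forall>n\<ge>1. \<forall>m\<ge>1. \<forall>A\<in>arv P n. \<forall>B\<in>arv P m.
        V (n + m) (Umap P n m A B) = Umap Q n m (V n A) (V m B))"

end

theory Submission
  imports Defs
begin


lemma stoch_nonneg: "stochastic P \<Longrightarrow> P i j \<ge> 0" by (simp add: stochastic_def)

lemma stoch_le1: assumes "stochastic P" shows "P i j \<le> 1"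
proof -
  have h: "((\<lambda>j. P i j) has_sum 1) UNIV" using assms by (simp add: stochastic_def)
  have "sum (\<lambda>j. P i j) {j} \<le> 1"
    by (rule finite_sum_le_has_sum[OF h]) (use assms stoch_nonneg in auto)
  thus ?thesis by simp
qed

lemma mpow_nonneg: "stochastic P \<Longrightarrow> mpow P n i j \<ge> 0"
proof (induction n arbitrary: i j)
  case 0 then show ?case by simp
next
  case (Suc n) then show ?case
    by (simp add: infsum_nonneg stoch_nonneg)
qed

lemma has_sum_single_pt:
  fixes f :: "'a \<Rightarrow> 'b::{comm_monoid_add,topological_space}"
  assumes "\<And>x. x \<noteq> a \<Longrightarrow> f x = 0" shows "(f has_sum f a) UNIV"
proof -
  have "(f has_sum f a) {a}" by (rule has_sum_finiteI) auto
  then show ?thesis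
    by (rule has_sum_cong_neutral[THEN iffD1, rotated -1]) (use assms in auto)
qed

lemma infsum_single_pt:
  fixes f :: "'a \<Rightarrow> 'b::{comm_monoid_add,t2_space}"
  assumes "\<And>x. x \<noteq> a \<Longrightarrow> f x = 0" shows "infsum f UNIV = f a"
  using has_sum_single_pt[OF assms] by (rule infsumI)

lemma infsum_fin_sum:
  fixes g :: "'k \<Rightarrow> 'a \<Rightarrow> 'b::{topological_comm_monoid_add,t2_space}"
  assumes "finite F" "\<And>k. k \<in> F \<Longrightarrow> g k summable_on A"
  shows "(\<Sum>k\<in>F. infsum (g k) A) = infsum (\<lambda>j. \<Sum>k\<in>F. g k j) A
       \<and> (\<lambda>j. \<Sum>k\<in>F. g k j) summable_on A"
  using assms
proof (induction F rule: finite_induct)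
  case empty then show ?case by simp
next
  case (insert x F)
  then show ?case by (simp add: infsum_add summable_on_add)
qed

lemma mpow_row:
  assumes st: "stochastic P"
  shows "(\<lambda>j. mpow P n i j) summable_on UNIV \<and> infsum (\<lambda>j. mpow P n i j) UNIV \<le> 1"
proof (induction n arbitrary: i)
  case 0
  have h: "((\<lambda>j. mpow P 0 i j) has_sum mpow P 0 i i) UNIV"
    by (rule has_sum_single_pt) simp
  then show ?case by (simp add: has_sum_iff)
next
  case (Suc n)
  define M where "M = mpow P n"
  have Ms: "(\<lambda>j. M i j) summable_on UNIV" and M1: "infsum (\<lambda>j. M i j) UNIV \<le> 1"
    using Suc.IH M_def by auto
  have Mnn: "\<And>i j. M i j \<ge> 0" using mpow_nonneg[OF st] M_def by auto
  have ts: "(\<lambda>j. M i j * P j k) summable_on UNIV" for k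
    by (rule summable_on_comparison_test[OF Ms])
       (auto simp: Mnn stoch_nonneg[OF st] stoch_le1[OF st] mult_left_le)
  have eq: "mpow P (Suc n) i k = infsum (\<lambda>j. M i j * P j k) UNIV" for k
    by (simp add: M_def)
  have bnd: "sum (\<lambda>k. mpow P (Suc n) i k) F \<le> 1" if "finite F" for F
  proof -
    have "sum (\<lambda>k. mpow P (Suc n) i k) F = infsum (\<lambda>j. \<Sum>k\<in>F. M i j * P j k) UNIV"
      using infsum_fin_sum[of F "\<lambda>k j. M i j * P j k" UNIV] that ts by (simp add: M_def)
    also have "\<dots> \<le> infsum (\<lambda>j. M i j) UNIV"
    proof (rule infsum_mono)
      show "(\<lambda>j. \<Sum>k\<in>F. M i j * P j k) summable_on UNIV"
        using infsum_fin_sum[of F "\<lambda>k j. M i j * P j k" UNIV] that ts by simp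
      show "(\<lambda>j. M i j) summable_on UNIV" by (rule Ms)
      fix j
      have "sum (\<lambda>k. P j k) F \<le> 1"
      proof -
        have h: "((\<lambda>k. P j k) has_sum 1) UNIV" using st by (simp add: stochastic_def)
        show ?thesis
          by (rule finite_sum_le_has_sum[OF h that]) (use st stoch_nonneg in auto)
      qed
      then have "M i j * sum (\<lambda>k. P j k) F \<le> M i j"
        using Mnn mult_left_le by blast
      then show "(\<Sum>k\<in>F. M i j * P j k) \<le> M i j" by (simp add: sum_distrib_left)
    qed
    also have "\<dots> \<le> 1" by (rule M1)
    finally show ?thesis .
  qed
  have nn: "\<And>k. mpow P (Suc n) i k \<ge> 0" using mpow_nonneg[OF st] by blast
  have s: "(\<lambda>k. mpow P (Suc n) i k) summable_on UNIV"
    by (rule nonneg_bdd_above_summable_on) (use nn bnd in \<open>auto intro!: bdd_aboveI2[where M=1]\<close>)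
  moreover have "infsum (\<lambda>k. mpow P (Suc n) i k) UNIV \<le> 1"
    by (rule infsum_le_finite_sums[OF s]) (use bnd in auto)
  ultimately show ?case by blast
qed

lemma mpow_Suc_pos:
  assumes st: "stochastic P"
  shows "mpow P (Suc n) i k > 0 \<longleftrightarrow> (\<exists>j. mpow P n i j > 0 \<and> P j k > 0)"
proof
  assume "mpow P (Suc n) i k > 0"
  show "\<exists>j. mpow P n i j > 0 \<and> P j k > 0"
  proof (rule ccontr)
    assume "\<not> ?thesis"
    then have "\<And>j. mpow P n i j * P j k = 0"
      using mpow_nonneg[OF st, of n i] stoch_nonneg[OF st, of _ k] by (metis less_eq_real_def mult_eq_0_iff)
    then have "(\<lambda>j. mpow P n i j * P j k) = (\<lambda>_. 0)" by (intro ext) simp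
    then have "mpow P (Suc n) i k = 0" by simp
    with \<open>mpow P (Suc n) i k > 0\<close> show False by simp
  qed
next
  assume "\<exists>j. mpow P n i j > 0 \<and> P j k > 0"
  then obtain j where j: "mpow P n i j > 0" "P j k > 0" by blast
  have Ms: "(\<lambda>j. mpow P n i j) summable_on UNIV" using mpow_row[OF st] by blast
  have ts: "(\<lambda>j. mpow P n i j * P j k) summable_on UNIV"
    by (rule summable_on_comparison_test[OF Ms])
       (auto simp: mpow_nonneg[OF st] stoch_nonneg[OF st] stoch_le1[OF st] mult_left_le)
  have "sum (\<lambda>j. mpow P n i j * P j k) {j} \<le> infsum (\<lambda>j. mpow P n i j * P j k) UNIV"
    by (rule finite_sum_le_infsum[OF ts]) (auto simp: mpow_nonneg[OF st] stoch_nonneg[OF st])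
  then show "mpow P (Suc n) i k > 0" using j by simp (smt (verit) mult_pos_pos)
qed

lemma arv_perm:
  assumes f: "bij f" and z: "\<And>i j. mpow Q n i j = 0 \<Longrightarrow> mpow P n (f i) (f j) = 0"
    and A: "A \<in> arv P n"
  shows "(\<lambda>i j. A (f i) (f j)) \<in> arv Q n"
proof -
  have bf: "bij_betw f UNIV UNIV" using f by (simp add: bij_def bij_betw_def)
  have A1: "\<And>i j. mpow P n i j = 0 \<Longrightarrow> A i j = 0"
   and A2: "\<And>j. (\<lambda>i. (cmod (A i j))\<^sup>2) summable_on UNIV"
   and A3: "bdd_above (range (\<lambda>j. infsum (\<lambda>i. (cmod (A i j))\<^sup>2) UNIV))"
    using A by (auto simp: arv_def)
  have c: "infsum (\<lambda>i. (cmod (A (f i) (f j)))\<^sup>2) UNIV = infsum (\<lambda>i. (cmod (A i (f j)))\<^sup>2) UNIV" for j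
    using infsum_reindex_bij_betw[OF bf, of "\<lambda>i. (cmod (A i (f j)))\<^sup>2"] by simp
  have s: "(\<lambda>i. (cmod (A (f i) (f j)))\<^sup>2) summable_on UNIV" for j
    using summable_on_reindex_bij_betw[OF bf, of "\<lambda>i. (cmod (A i (f j)))\<^sup>2"] A2 by simp
  have b: "bdd_above (range (\<lambda>j. infsum (\<lambda>i. (cmod (A (f i) (f j)))\<^sup>2) UNIV))"
  proof -
    have "range (\<lambda>j. infsum (\<lambda>i. (cmod (A (f i) (f j)))\<^sup>2) UNIV)
          \<subseteq> range (\<lambda>j. infsum (\<lambda>i. (cmod (A i j))\<^sup>2) UNIV)"
      using c by auto
    then show ?thesis by (rule bdd_above_mono[OF A3])
  qed
  show ?thesis unfolding arv_def using A1 z s b by auto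
qed

lemma arv_ip_linf:
  assumes A: "A \<in> arv P n" and B: "B \<in> arv P n"
  shows "arv_ip A B \<in> linf"
proof -
  have A2: "\<And>j. (\<lambda>i. (cmod (A i j))\<^sup>2) summable_on UNIV"
   and A3: "bdd_above (range (\<lambda>j. infsum (\<lambda>i. (cmod (A i j))\<^sup>2) UNIV))"
   and B2: "\<And>j. (\<lambda>i. (cmod (B i j))\<^sup>2) summable_on UNIV"
   and B3: "bdd_above (range (\<lambda>j. infsum (\<lambda>i. (cmod (B i j))\<^sup>2) UNIV))"
    using A B by (auto simp: arv_def)
  obtain CA where CA: "\<And>j. infsum (\<lambda>i. (cmod (A i j))\<^sup>2) UNIV \<le> CA"
    using A3 by (auto simp: bdd_above_def)
  obtain CB where CB: "\<And>j. infsum (\<lambda>i. (cmod (B i j))\<^sup>2) UNIV \<le> CB"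
    using B3 by (auto simp: bdd_above_def)
  have "cmod (arv_ip A B j) \<le> CA + CB" for j
  proof -
    define g where "g i = (cmod (A i j))\<^sup>2 + (cmod (B i j))\<^sup>2" for i
    have gs: "g summable_on UNIV" unfolding g_def
      by (intro summable_on_add A2 B2)
    have gi: "infsum g UNIV = infsum (\<lambda>i. (cmod (A i j))\<^sup>2) UNIV + infsum (\<lambda>i. (cmod (B i j))\<^sup>2) UNIV"
      unfolding g_def by (simp add: infsum_add A2 B2)
    have le: "norm (cnj (A i j) * B i j) \<le> norm (g i)" for i
    proof -
      have "cmod (A i j) * cmod (B i j) \<le> (cmod (A i j))\<^sup>2 + (cmod (B i j))\<^sup>2"
      proof -
        have "0 \<le> (cmod (A i j) - cmod (B i j))\<^sup>2" by simp
        moreover have "0 \<le> cmod (A i j) * cmod (B i j)" by simp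
        ultimately show ?thesis unfolding power2_diff by linarith
      qed
      moreover have "g i \<ge> 0" by (simp add: g_def)
      moreover have "norm (cnj (A i j) * B i j) = cmod (A i j) * cmod (B i j)" by (simp add: norm_mult)
      ultimately show ?thesis unfolding g_def by simp
    qed
    have gas: "(\<lambda>i. norm (g i)) summable_on UNIV"
    proof -
      have "(\<lambda>i. norm (g i)) = g" by (rule ext) (simp add: g_def)
      then show ?thesis using gs by simp
    qed
    have fas: "(\<lambda>i. norm (cnj (A i j) * B i j)) summable_on UNIV"
      by (rule summable_on_comparison_test[OF gs]) (use le in \<open>auto simp: g_def\<close>)
    have "cmod (arv_ip A B j) \<le> infsum (\<lambda>i. norm (cnj (A i j) * B i j)) UNIV"
      unfolding arv_ip_def by (rule norm_infsum_bound[OF fas])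
    also have "\<dots> \<le> infsum g UNIV"
      by (rule infsum_mono[OF fas gs]) (use le in \<open>auto simp: g_def\<close>)
    also have "\<dots> \<le> CA + CB" using gi CA[of j] CB[of j] by simp
    finally show ?thesis .
  qed
  then show ?thesis unfolding linf_def mem_Collect_eq by (intro bdd_aboveI[where M="CA+CB"]) auto
qed

lemma part2:
  assumes sP: "stochastic P" and sQ: "stochastic Q" and sc: "star_cond P Q \<sigma>"
  shows "\<exists>V. rho_unitary_iso P Q (rho_of \<sigma>) V"
proof -
  define \<tau> where "\<tau> = inv \<sigma>"
  have bs: "bij \<sigma>" and pa: "\<And>i j. P i j > 0 \<longleftrightarrow> Q (\<sigma> i) (\<sigma> j) > 0"
   and rat: "\<And>n m i j k. mpow P n i j * mpow P m j k > 0 \<Longrightarrow>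
          mpow P n i j * mpow P m j k / mpow P (n + m) i k =
          mpow Q n (\<sigma> i) (\<sigma> j) * mpow Q m (\<sigma> j) (\<sigma> k) / mpow Q (n + m) (\<sigma> i) (\<sigma> k)"
    using sc unfolding star_cond_def by blast+
  have bt: "bij \<tau>" using bs by (simp add: \<tau>_def bij_imp_bij_inv)
  have st: "\<And>x. \<sigma> (\<tau> x) = x" using bs by (simp add: \<tau>_def surj_f_inv_f bij_is_surj)
  have ts: "\<And>x. \<tau> (\<sigma> x) = x" using bs by (simp add: \<tau>_def inv_f_f bij_is_inj)
  have posPQ: "mpow Q n (\<sigma> i) (\<sigma> j) > 0" if "mpow P n i j > 0" for n i j
  proof -
    have "mpow P n i j * mpow P 0 j j > 0" using that by simp
    from rat[OF this] have "mpow Q n (\<sigma> i) (\<sigma> j) / mpow Q n (\<sigma> i) (\<sigma> j) = 1"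
      using that by simp
    then have "mpow Q n (\<sigma> i) (\<sigma> j) \<noteq> 0" by auto
    then show ?thesis using mpow_nonneg[OF sQ, of n "\<sigma> i" "\<sigma> j"] by simp
  qed
  have posQP: "mpow P n (\<tau> a) (\<tau> c) > 0" if "mpow Q n a c > 0" for n a c
    using that
  proof (induction n arbitrary: c)
    case 0 then show ?case by (simp split: if_splits)
  next
    case (Suc n)
    then obtain b where b: "mpow Q n a b > 0" "Q b c > 0" using mpow_Suc_pos[OF sQ] by blast
    have "mpow P n (\<tau> a) (\<tau> b) > 0" using Suc.IH b(1) by blast
    moreover have "P (\<tau> b) (\<tau> c) > 0" using pa[of "\<tau> b" "\<tau> c"] b(2) by (simp add: st)
    ultimately show ?case using mpow_Suc_pos[OF sP] by blast
  qed
  define V where "V = (\<lambda>(n::nat) A i j. A (\<tau> i) (\<tau> j) :: complex)"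
  have VarvI: "V n A \<in> arv Q n" if "A \<in> arv P n" for n A
    unfolding V_def
  proof (rule arv_perm[OF bt _ that])
    fix i j assume "mpow Q n i j = 0"
    then show "mpow P n (\<tau> i) (\<tau> j) = 0"
      using posPQ[of n "\<tau> i" "\<tau> j"] mpow_nonneg[OF sP, of n "\<tau> i" "\<tau> j"] by (auto simp: st less_eq_real_def)
  qed
  have img: "V n ` arv P n = arv Q n" for n
  proof
    show "V n ` arv P n \<subseteq> arv Q n" using VarvI by blast
    show "arv Q n \<subseteq> V n ` arv P n"
    proof
      fix B assume B: "B \<in> arv Q n"
      have A: "(\<lambda>i j. B (\<sigma> i) (\<sigma> j)) \<in> arv P n"
      proof (rule arv_perm[OF bs _ B])
        fix i j assume "mpow P n i j = 0"
        then show "mpow Q n (\<sigma> i) (\<sigma> j) = 0"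
          using posQP[of n "\<sigma> i" "\<sigma> j"] mpow_nonneg[OF sQ, of n "\<sigma> i" "\<sigma> j"] by (auto simp: ts less_eq_real_def)
      qed
      have "B = V n (\<lambda>i j. B (\<sigma> i) (\<sigma> j))" by (simp add: V_def st)
      then show "B \<in> V n ` arv P n" using A by blast
    qed
  qed
  have injr: "inj_on (rho_of \<sigma>) linf"
  proof (rule inj_onI)
    fix f g :: "'a \<Rightarrow> complex" assume "rho_of \<sigma> f = rho_of \<sigma> g"
    then have "\<And>x. f (\<tau> (\<sigma> x)) = g (\<tau> (\<sigma> x))" unfolding rho_of_def \<tau>_def[symmetric]
      by (metis comp_apply)
    then show "f = g" by (simp add: ts ext)
  qed
  have ip: "inv_into linf (rho_of \<sigma>) (arv_ip (V n A) (V n B)) = arv_ip A B"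
    if A: "A \<in> arv P n" and B: "B \<in> arv P n" for n A B
  proof -
    have bbt: "bij_betw \<tau> UNIV UNIV" using bt by (simp add: bij_def bij_betw_def)
    have "arv_ip (V n A) (V n B) = rho_of \<sigma> (arv_ip A B)"
      unfolding arv_ip_def V_def rho_of_def \<tau>_def[symmetric]
      by (rule ext) (simp add: infsum_reindex_bij_betw[OF bbt, of "\<lambda>i. cnj (A i (\<tau> _)) * B i (\<tau> _)"])
    then show ?thesis using inv_into_f_f[OF injr arv_ip_linf[OF A B]] by simp
  qed
  have "rho_unitary_iso P Q (rho_of \<sigma>) V"
    unfolding rho_unitary_iso_def
  proof (intro conjI allI impI ballI)
    fix n :: nat assume "n \<ge> 1"
    show "V n ` arv P n = arv Q n" by (rule img)
  next
    fix n :: nat and A B assume "A \<in> arv P n" "B \<in> arv P n"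
    show "V n (\<lambda>i j. A i j + B i j) = (\<lambda>i j. V n A i j + V n B i j)" by (simp add: V_def)
  next
    fix n :: nat and A c
    show "V n (\<lambda>i j. c * A i j) = (\<lambda>i j. c * V n A i j)" by (simp add: V_def)
  next
    fix n :: nat and a b A
    show "V n (bimod a A b) = bimod (rho_of \<sigma> a) (V n A) (rho_of \<sigma> b)"
      by (simp add: V_def bimod_def rho_of_def \<tau>_def)
  next
    fix n :: nat and A B assume "A \<in> arv P n" "B \<in> arv P n"
    then show "inv_into linf (rho_of \<sigma>) (arv_ip (V n A) (V n B)) = arv_ip A B" by (rule ip)
  next
    fix n m :: nat and A B assume A: "A \<in> arv P n" and B: "B \<in> arv P m"
    have A1: "\<And>i j. mpow P n i j = 0 \<Longrightarrow> A i j = 0" using A by (auto simp: arv_def)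
    have B1: "\<And>i j. mpow P m i j = 0 \<Longrightarrow> B i j = 0" using B by (auto simp: arv_def)
    have bbt: "bij_betw \<tau> UNIV UNIV" using bt by (simp add: bij_def bij_betw_def)
    show "V (n + m) (Umap P n m A B) = Umap Q n m (V n A) (V m B)"
    proof (rule ext, rule ext)
      fix a c
      define i k where "i = \<tau> a" and "k = \<tau> c"
      have ai: "a = \<sigma> i" "c = \<sigma> k" by (simp_all add: i_def k_def st)
      have key: "complex_of_real (flat (sqrt (mpow P (n + m) i k))) *
               ((complex_of_real (sqrt (mpow P n i j)) * A i j) *
               (complex_of_real (sqrt (mpow P m j k)) * B j k))
            = complex_of_real (flat (sqrt (mpow Q (n + m) (\<sigma> i) (\<sigma> k)))) *
               ((complex_of_real (sqrt (mpow Q n (\<sigma> i) (\<sigma> j))) * A i j) *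
               (complex_of_real (sqrt (mpow Q m (\<sigma> j) (\<sigma> k))) * B j k))" for j
      proof (cases "A i j * B j k = 0")
        case True then show ?thesis by auto
      next
        case False
        then have "mpow P n i j \<noteq> 0" "mpow P m j k \<noteq> 0" using A1 B1 by auto
        then have pp: "mpow P n i j * mpow P m j k > 0"
          using mpow_nonneg[OF sP, of n i j] mpow_nonneg[OF sP, of m j k] by simp
        have fl: "flat (sqrt p) * (sqrt x * sqrt y) = sqrt (x * y / p)" if "p \<ge> 0" "x \<ge> 0" "y \<ge> 0"
          for p x y :: real
          using that by (auto simp: flat_def real_sqrt_mult real_sqrt_divide)
        have "flat (sqrt (mpow P (n + m) i k)) * (sqrt (mpow P n i j) * sqrt (mpow P m j k))
            = flat (sqrt (mpow Q (n + m) (\<sigma> i) (\<sigma> k))) * (sqrt (mpow Q n (\<sigma> i) (\<sigma> j)) * sqrt (mpow Q m (\<sigma> j) (\<sigma> k)))"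
          by (simp add: fl mpow_nonneg[OF sP] mpow_nonneg[OF sQ] rat[OF pp])
        then have "complex_of_real (flat (sqrt (mpow P (n + m) i k)) * (sqrt (mpow P n i j) * sqrt (mpow P m j k)))
            = complex_of_real (flat (sqrt (mpow Q (n + m) (\<sigma> i) (\<sigma> k))) * (sqrt (mpow Q n (\<sigma> i) (\<sigma> j)) * sqrt (mpow Q m (\<sigma> j) (\<sigma> k))))"
          by simp
        then show ?thesis by (simp add: algebra_simps)
      qed
      have "V (n + m) (Umap P n m A B) a c = Umap P n m A B i k" by (simp add: V_def i_def k_def)
      also have "\<dots> = infsum (\<lambda>j. complex_of_real (flat (sqrt (mpow P (n + m) i k))) *
               ((complex_of_real (sqrt (mpow P n i j)) * A i j) *
               (complex_of_real (sqrt (mpow P m j k)) * B j k))) UNIV"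
        unfolding Umap_def by (rule infsum_cmult_right'[symmetric])
      also have "\<dots> = infsum (\<lambda>j. complex_of_real (flat (sqrt (mpow Q (n + m) (\<sigma> i) (\<sigma> k)))) *
               ((complex_of_real (sqrt (mpow Q n (\<sigma> i) (\<sigma> j))) * A i j) *
               (complex_of_real (sqrt (mpow Q m (\<sigma> j) (\<sigma> k))) * B j k))) UNIV"
        by (simp only: key)
      also have "\<dots> = infsum (\<lambda>j. complex_of_real (flat (sqrt (mpow Q (n + m) (\<sigma> i) (\<sigma> k)))) *
               ((complex_of_real (sqrt (mpow Q n (\<sigma> i) j)) * A i (\<tau> j)) *
               (complex_of_real (sqrt (mpow Q m j (\<sigma> k))) * B (\<tau> j) k))) UNIV"
        using infsum_reindex_bij_betw[OF bbt, of "\<lambda>j. complex_of_real (flat (sqrt (mpow Q (n + m) (\<sigma> i) (\<sigma> k)))) *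
               ((complex_of_real (sqrt (mpow Q n (\<sigma> i) (\<sigma> j))) * A i j) *
               (complex_of_real (sqrt (mpow Q m (\<sigma> j) (\<sigma> k))) * B j k))"]
        by (simp add: st)
      also have "\<dots> = Umap Q n m (V n A) (V m B) a c"
        unfolding Umap_def V_def ai by (simp add: ts infsum_cmult_right')
      finally show "V (n + m) (Umap P n m A B) a c = Umap Q n m (V n A) (V m B) a c" .
    qed
  qed
  then show ?thesis by blast
qed



lemma linf_pj: "pj j \<in> linf"
  unfolding linf_def pj_def by (auto intro!: bdd_aboveI[where M=1])

lemma linf_zero: "(\<lambda>x. 0) \<in> linf"
  unfolding linf_def by (auto intro!: bdd_aboveI[where M=0])

lemma linf_mult:
  assumes "f \<in> linf" "g \<in> linf" shows "(\<lambda>x. f x * g x) \<in> linf"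
proof -
  obtain Cf where Cf: "\<And>x. cmod (f x) \<le> Cf" using assms(1) unfolding linf_def bdd_above_def by auto
  obtain Cg where Cg: "\<And>x. cmod (g x) \<le> Cg" using assms(2) unfolding linf_def bdd_above_def by auto
  have "cmod (f x * g x) \<le> Cf * Cg" for x
    unfolding norm_mult by (rule mult_mono[OF Cf Cg]) (use order_trans[OF norm_ge_zero Cf] in auto)
  then show ?thesis unfolding linf_def by (auto intro!: bdd_aboveI[where M="Cf*Cg"])
qed

lemma sa_facts:
  assumes "star_aut \<rho>"
  shows sa_bij: "bij_betw \<rho> linf linf"
    and sa_smult: "\<And>f c. f \<in> linf \<Longrightarrow> \<rho> (\<lambda>x. c * f x) = (\<lambda>x. c * \<rho> f x)"
    and sa_mult: "\<And>f g. f \<in> linf \<Longrightarrow> g \<in> linf \<Longrightarrow> \<rho> (\<lambda>x. f x * g x) = (\<lambda>x. \<rho> f x * \<rho> g x)"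
  using assms unfolding star_aut_def by blast+

lemma sa_zero:
  assumes "star_aut \<rho>" shows "\<rho> (\<lambda>x. 0) = (\<lambda>x. 0)"
  using sa_smult[OF assms linf_pj, of 0 undefined] by simp

lemma sa_inj:
  assumes "star_aut \<rho>" "f \<in> linf" "g \<in> linf" "\<rho> f = \<rho> g" shows "f = g"
  using sa_bij[OF assms(1)] assms(2-4) unfolding bij_betw_def inj_on_def by blast

lemma sa_inv:
  assumes "star_aut \<rho>" "f \<in> linf"
  shows "inv_into linf \<rho> f \<in> linf" "\<rho> (inv_into linf \<rho> f) = f"
proof -
  have "f \<in> \<rho> ` linf" using sa_bij[OF assms(1)] assms(2) by (simp add: bij_betw_def)
  then show "inv_into linf \<rho> f \<in> linf" "\<rho> (inv_into linf \<rho> f) = f"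
    by (simp_all add: inv_into_into f_inv_into_f)
qed

lemma sa_inv_coord:
  assumes sa: "star_aut \<rho>" and qk: "\<rho> (pj j) k \<noteq> 0"
  shows "inv_into linf \<rho> (pj k) j = 1"
proof -
  define r where "r = inv_into linf \<rho> (pj k)"
  have r: "r \<in> linf" "\<rho> r = pj k" using sa_inv[OF sa linf_pj] r_def by auto
  have "\<rho> (\<lambda>x. r x * pj j x) = (\<lambda>x. pj k x * \<rho> (pj j) x)"
    using sa_mult[OF sa r(1) linf_pj] r(2) by simp
  moreover have "(\<lambda>x. r x * pj j x) = (\<lambda>x. r j * pj j x)" by (auto simp: pj_def)
  moreover have "\<rho> (\<lambda>x. r j * pj j x) = (\<lambda>x. r j * \<rho> (pj j) x)" by (rule sa_smult[OF sa linf_pj])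
  ultimately have "(\<lambda>x. r j * \<rho> (pj j) x) = (\<lambda>x. pj k x * \<rho> (pj j) x)" by simp
  from fun_cong[OF this, of k] have "r j * \<rho> (pj j) k = pj k k * \<rho> (pj j) k" by simp
  then show ?thesis using qk by (simp add: r_def pj_def)
qed

lemma sa_pj:
  assumes sa: "star_aut \<rho>"
  shows "\<exists>k. \<rho> (pj j) = pj k"
proof -
  define q where "q = \<rho> (pj j)"
  have ql: "q \<in> linf" unfolding q_def by (rule bij_betw_apply[OF sa_bij[OF sa] linf_pj])
  have "q \<noteq> (\<lambda>x. 0)"
  proof
    assume "q = (\<lambda>x. 0)"
    then have "\<rho> (pj j) = \<rho> (\<lambda>x. 0)" using sa_zero[OF sa] q_def by simp
    then have "pj j = (\<lambda>x. 0)" using sa_inj[OF sa linf_pj linf_zero] by blast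
    from fun_cong[OF this, of j] show False unfolding pj_def by simp
  qed
  then obtain k where k: "q k \<noteq> 0" by (meson ext)
  have uniq: "q k2 = 0" if "k2 \<noteq> k" for k2
  proof (rule ccontr)
    assume k2: "q k2 \<noteq> 0"
    define r1 where "r1 = inv_into linf \<rho> (pj k)"
    define r2 where "r2 = inv_into linf \<rho> (pj k2)"
    have r1: "r1 \<in> linf" "\<rho> r1 = pj k" using sa_inv[OF sa linf_pj] r1_def by auto
    have r2: "r2 \<in> linf" "\<rho> r2 = pj k2" using sa_inv[OF sa linf_pj] r2_def by auto
    have "r1 j = 1" using sa_inv_coord[OF sa, of j k] k unfolding q_def r1_def by simp
    moreover have "r2 j = 1" using sa_inv_coord[OF sa, of j k2] k2 unfolding q_def r2_def by simp
    moreover have "\<rho> (\<lambda>x. r1 x * r2 x) = \<rho> (\<lambda>x. 0)"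
    proof -
      have "(\<lambda>x. pj k x * pj k2 x) = (\<lambda>x. 0)" using that by (auto simp: pj_def)
      then show ?thesis using sa_mult[OF sa r1(1) r2(1)] r1(2) r2(2) sa_zero[OF sa] by simp
    qed
    then have "(\<lambda>x. r1 x * r2 x) = (\<lambda>x. 0)"
      using sa_inj[OF sa linf_mult[OF r1(1) r2(1)] linf_zero] by blast
    from fun_cong[OF this, of j] have "r1 j * r2 j = 0" by simp
    ultimately show False by simp
  qed
  have "q k * q k = q k"
  proof -
    have "\<rho> (\<lambda>x. pj j x * pj j x) = (\<lambda>x. q x * q x)" using sa_mult[OF sa linf_pj linf_pj] q_def by simp
    moreover have "(\<lambda>x. pj j x * pj j x) = pj j" by (auto simp: pj_def)
    ultimately have "(\<lambda>x. q x * q x) = q" using q_def by simp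
    from fun_cong[OF this, of k] show ?thesis by simp
  qed
  then have "q k = 1" using k by (metis mult_cancel_right2)
  then have "q = pj k" using uniq by (auto simp: pj_def)
  then show ?thesis unfolding q_def by (rule exI)
qed

lemma sa_sigma:
  assumes sa: "star_aut \<rho>"
  shows "\<rho> (pj j) = pj (sigma_of \<rho> j)" and "bij (sigma_of \<rho>)"
proof -
  have pj_inj: "pj a = pj b \<Longrightarrow> a = b" for a b :: 'a
    using fun_cong[of "pj a" "pj b" a] unfolding pj_def by (simp split: if_splits)
  have ex: "\<rho> (pj j) = pj (sigma_of \<rho> j)" for j
  proof -
    obtain k where k: "\<rho> (pj j) = pj k" using sa_pj[OF sa] by blast
    have "(THE k. \<rho> (pj j) = pj k) = k"
      by (rule the_equality) (use k pj_inj in auto)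
    then show ?thesis using k by (simp add: sigma_of_def)
  qed
  then show "\<rho> (pj j) = pj (sigma_of \<rho> j)" .
  show "bij (sigma_of \<rho>)"
  proof (rule bijI)
    show "inj (sigma_of \<rho>)"
    proof (rule injI)
      fix a b assume "sigma_of \<rho> a = sigma_of \<rho> b"
      then have "\<rho> (pj a) = \<rho> (pj b)" using ex by simp
      then show "a = b" using sa_inj[OF sa linf_pj linf_pj] pj_inj by blast
    qed
    show "surj (sigma_of \<rho>)"
    proof -
      have "k \<in> range (sigma_of \<rho>)" for k
      proof -
        define r where "r = inv_into linf \<rho> (pj k)"
        have r: "r \<in> linf" "\<rho> r = pj k" using sa_inv[OF sa linf_pj] r_def by auto
        have "r \<noteq> (\<lambda>x. 0)"
        proof
          assume "r = (\<lambda>x. 0)" then have "pj k = (\<lambda>x. 0)" using r sa_zero[OF sa] by simp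
          from fun_cong[OF this, of k] show False unfolding pj_def by simp
        qed
        then obtain j where j: "r j \<noteq> 0" by (meson ext)
        have "\<rho> (\<lambda>x. pj j x * r x) = (\<lambda>x. pj (sigma_of \<rho> j) x * pj k x)"
          using sa_mult[OF sa linf_pj r(1)] r(2) ex by simp
        moreover have "(\<lambda>x. pj j x * r x) = (\<lambda>x. r j * pj j x)" by (auto simp: pj_def)
        moreover have "\<rho> (\<lambda>x. r j * pj j x) = (\<lambda>x. r j * pj (sigma_of \<rho> j) x)"
          using sa_smult[OF sa linf_pj] ex by simp
        ultimately have "(\<lambda>x. r j * pj (sigma_of \<rho> j) x) = (\<lambda>x. pj (sigma_of \<rho> j) x * pj k x)" by simp
        from fun_cong[OF this, of "sigma_of \<rho> j"]
        have "r j * pj (sigma_of \<rho> j) (sigma_of \<rho> j) = pj (sigma_of \<rho> j) (sigma_of \<rho> j) * pj k (sigma_of \<rho> j)"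
          by simp
        then have "sigma_of \<rho> j = k" using j by (auto simp: pj_def split: if_splits)
        then show ?thesis by blast
      qed
      then show ?thesis by blast
    qed
  qed
qed



definition mu :: "'a \<Rightarrow> 'a \<Rightarrow> 'a \<Rightarrow> 'a \<Rightarrow> complex" where
  "mu a b = (\<lambda>i j. if i = a \<and> j = b then 1 else 0)"

lemma zero_arv: "(\<lambda>i j. 0) \<in> arv P n"
  by (auto simp: arv_def)

lemma mu_arv:
  assumes "mpow P n a b \<noteq> 0" shows "mu a b \<in> arv P n"
proof -
  have hs: "((\<lambda>i. (cmod (mu a b i j))\<^sup>2) has_sum (if j = b then 1 else 0)) UNIV" for j
  proof -
    have h: "((\<lambda>i. (cmod (mu a b i j))\<^sup>2) has_sum (cmod (mu a b a j))\<^sup>2) UNIV"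
      by (rule has_sum_single_pt) (simp add: mu_def)
    have v: "(cmod (mu a b a j))\<^sup>2 = (if j = b then 1 else 0)" by (simp add: mu_def)
    show ?thesis using h unfolding v .
  qed
  have "bdd_above (range (\<lambda>j. infsum (\<lambda>i. (cmod (mu a b i j))\<^sup>2) UNIV))"
  proof (rule bdd_aboveI[where M=1])
    fix r assume "r \<in> range (\<lambda>j. infsum (\<lambda>i. (cmod (mu a b i j))\<^sup>2) UNIV)"
    then obtain j where "r = infsum (\<lambda>i. (cmod (mu a b i j))\<^sup>2) UNIV" by auto
    then have "r = (if j = b then 1 else 0)" using infsumI[OF hs[of j]] by simp
    then show "r \<le> 1" by simp
  qed
  moreover have "\<And>j. (\<lambda>i. (cmod (mu a b i j))\<^sup>2) summable_on UNIV"
    using hs summable_on_def by blast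
  moreover have "\<And>i j. mpow P n i j = 0 \<Longrightarrow> mu a b i j = 0"
    using assms by (auto simp: mu_def)
  ultimately show ?thesis by (simp add: arv_def)
qed

lemma mpow_one: "mpow P (Suc 0) i k = P i k"
  by (simp add: infsum_single_pt[where a=i])

lemma mpow_one1: "mpow P 1 i k = P i k"
  using mpow_one[of P i k] by (simp only: One_nat_def)

lemma flat_sqrt:
  fixes p x y :: real
  assumes "p \<ge> 0" "x \<ge> 0" "y \<ge> 0"
  shows "flat (sqrt p) * (sqrt x * sqrt y) = sqrt (x * y / p)"
  using assms by (auto simp: flat_def real_sqrt_mult real_sqrt_divide)

lemma flat_nonneg: "flat x \<ge> 0 \<longleftrightarrow> True"
  by (simp add: flat_def)

lemma Umap_mu:
  "Umap P n m (\<lambda>x y. c1 * mu a b x y) (\<lambda>x y. c2 * mu b d x y) =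
   (\<lambda>x y. complex_of_real (flat (sqrt (mpow P (n+m) a d)) * (sqrt (mpow P n a b) * sqrt (mpow P m b d)))
          * (c1 * c2) * mu a d x y)"
proof (intro ext)
  fix x y
  have "infsum (\<lambda>z. (complex_of_real (sqrt (mpow P n x z)) * (c1 * mu a b x z)) *
                  (complex_of_real (sqrt (mpow P m z y)) * (c2 * mu b d z y))) UNIV
        = (complex_of_real (sqrt (mpow P n x b)) * (c1 * mu a b x b)) *
                  (complex_of_real (sqrt (mpow P m b y)) * (c2 * mu b d b y))"
    by (rule infsum_single_pt) (simp add: mu_def)
  then show "Umap P n m (\<lambda>x y. c1 * mu a b x y) (\<lambda>x y. c2 * mu b d x y) x y =
   complex_of_real (flat (sqrt (mpow P (n+m) a d)) * (sqrt (mpow P n a b) * sqrt (mpow P m b d)))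
          * (c1 * c2) * mu a d x y"
    unfolding Umap_def by (simp add: mu_def)
qed

lemma ru_facts:
  assumes "rho_unitary_iso P Q \<rho> V"
  shows ru_img: "\<And>n. n \<ge> 1 \<Longrightarrow> V n ` arv P n = arv Q n"
    and ru_smult: "\<And>n A c. n \<ge> 1 \<Longrightarrow> A \<in> arv P n \<Longrightarrow> V n (\<lambda>i j. c * A i j) = (\<lambda>i j. c * V n A i j)"
    and ru_bimod: "\<And>n a b A. n \<ge> 1 \<Longrightarrow> a \<in> linf \<Longrightarrow> b \<in> linf \<Longrightarrow> A \<in> arv P n \<Longrightarrow>
                     V n (bimod a A b) = bimod (\<rho> a) (V n A) (\<rho> b)"
    and ru_ip: "\<And>n A B. n \<ge> 1 \<Longrightarrow> A \<in> arv P n \<Longrightarrow> B \<in> arv P n \<Longrightarrow>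
                     inv_into linf \<rho> (arv_ip (V n A) (V n B)) = arv_ip A B"
    and ru_U: "\<And>n m A B. n \<ge> 1 \<Longrightarrow> m \<ge> 1 \<Longrightarrow> A \<in> arv P n \<Longrightarrow> B \<in> arv P m \<Longrightarrow>
                     V (n + m) (Umap P n m A B) = Umap Q n m (V n A) (V m B)"
  using assms unfolding rho_unitary_iso_def by blast+

lemma V_zero:
  assumes "rho_unitary_iso P Q \<rho> V" "n \<ge> 1"
  shows "V n (\<lambda>i j. 0) = (\<lambda>i j. 0)"
  using ru_smult[OF assms(1) assms(2) zero_arv, of 0] by simp

lemma V_mu:
  assumes sa: "star_aut \<rho>" and ru: "rho_unitary_iso P Q \<rho> V" and n: "n \<ge> 1"
    and ab: "mpow P n a b \<noteq> 0"
  shows "\<exists>c. cmod c = 1 \<and> V n (mu a b) = (\<lambda>i j. c * mu (sigma_of \<rho> a) (sigma_of \<rho> b) i j)"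
proof -
  define \<sigma> where "\<sigma> = sigma_of \<rho>"
  have rp: "\<And>j. \<rho> (pj j) = pj (\<sigma> j)" using sa_sigma(1)[OF sa] \<sigma>_def by simp
  have M: "mu a b \<in> arv P n" by (rule mu_arv[OF ab])
  have bm: "bimod (pj a) (mu a b) (pj b) = mu a b" by (intro ext) (auto simp: bimod_def pj_def mu_def)
  have "V n (bimod (pj a) (mu a b) (pj b)) = bimod (pj (\<sigma> a)) (V n (mu a b)) (pj (\<sigma> b))"
    using ru_bimod[OF ru n linf_pj[of a] linf_pj[of b] M] rp[of a] rp[of b] by simp
  then have "V n (mu a b) = bimod (pj (\<sigma> a)) (V n (mu a b)) (pj (\<sigma> b))"
    unfolding bm .
  define c where "c = V n (mu a b) (\<sigma> a) (\<sigma> b)"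
  have Vmu: "V n (mu a b) = (\<lambda>i j. c * mu (\<sigma> a) (\<sigma> b) i j)"
  proof (intro ext)
    fix i j
    have "V n (mu a b) i j = bimod (pj (\<sigma> a)) (V n (mu a b)) (pj (\<sigma> b)) i j"
      using \<open>V n (mu a b) = _\<close> by simp
    then show "V n (mu a b) i j = c * mu (\<sigma> a) (\<sigma> b) i j"
      by (auto simp: bimod_def pj_def mu_def c_def)
  qed
  have ip1: "arv_ip (V n (mu a b)) (V n (mu a b)) = (\<lambda>x. if x = \<sigma> b then cnj c * c else 0)"
  proof (intro ext)
    fix x
    show "arv_ip (V n (mu a b)) (V n (mu a b)) x = (if x = \<sigma> b then cnj c * c else 0)"
      unfolding arv_ip_def Vmu
      by (subst infsum_single_pt[where a="\<sigma> a"]) (auto simp: mu_def)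
  qed
  have ip2: "arv_ip (mu a b) (mu a b) = pj b"
  proof (intro ext)
    fix x
    show "arv_ip (mu a b) (mu a b) x = pj b x"
      unfolding arv_ip_def
      by (subst infsum_single_pt[where a="a"]) (auto simp: mu_def pj_def)
  qed
  define y where "y = (\<lambda>x. if x = \<sigma> b then cnj c * c else 0)"
  have yl: "y \<in> linf" unfolding linf_def y_def
    by (auto intro!: bdd_aboveI[where M="cmod (cnj c * c)"])
  have "inv_into linf \<rho> y = pj b"
    using ru_ip[OF ru n M M] ip1 ip2 y_def by simp
  then have "y = \<rho> (pj b)" using sa_inv(2)[OF sa yl] by simp
  then have "y = pj (\<sigma> b)" using rp by simp
  from fun_cong[OF this, of "\<sigma> b"] have "cnj c * c = 1" by (simp add: y_def pj_def)
  then have "cmod (c * cnj c) = 1" by (simp add: mult.commute)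
  then have "(cmod c)\<^sup>2 = 1" by (simp add: complex_mod_mult_cnj)
  then have "cmod c = 1" using norm_ge_zero[of c] by (simp add: power2_eq_1_iff)
  then show ?thesis using Vmu \<sigma>_def by blast
qed

lemma part1:
  assumes sP: "stochastic P" and sQ: "stochastic Q" and sa: "star_aut \<rho>"
    and ru: "rho_unitary_iso P Q \<rho> V"
  shows "star_cond P Q (sigma_of \<rho>)"
proof -
  define \<sigma> where "\<sigma> = sigma_of \<rho>"
  have rp: "\<And>j. \<rho> (pj j) = pj (\<sigma> j)" using sa_sigma(1)[OF sa] \<sigma>_def by simp
  have bs: "bij \<sigma>" using sa_sigma(2)[OF sa] \<sigma>_def by simp
  have posPQ: "mpow Q n (\<sigma> i) (\<sigma> j) > 0" if pos: "mpow P n i j > 0" for n i j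
  proof (cases "n = 0")
    case True then show ?thesis using that by (simp split: if_splits)
  next
    case False
    then have n: "n \<ge> 1" by simp
    obtain c where c: "cmod c = 1" "V n (mu i j) = (\<lambda>a b. c * mu (\<sigma> i) (\<sigma> j) a b)"
      using V_mu[OF sa ru n, of i j] pos \<sigma>_def by fastforce
    have "V n (mu i j) \<in> arv Q n" using ru_img[OF ru n] mu_arv[of P n i j] pos by force
    then have "mpow Q n (\<sigma> i) (\<sigma> j) = 0 \<Longrightarrow> V n (mu i j) (\<sigma> i) (\<sigma> j) = 0"
      by (auto simp: arv_def)
    then have "mpow Q n (\<sigma> i) (\<sigma> j) \<noteq> 0" using c by (auto simp: mu_def)
    then show ?thesis using mpow_nonneg[OF sQ, of n "\<sigma> i" "\<sigma> j"] by simp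
  qed
  have pa: "P i j > 0 \<longleftrightarrow> Q (\<sigma> i) (\<sigma> j) > 0" for i j
  proof
    assume "P i j > 0"
    then show "Q (\<sigma> i) (\<sigma> j) > 0" using posPQ[of 1 i j] unfolding mpow_one1 by simp
  next
    assume q: "Q (\<sigma> i) (\<sigma> j) > 0"
    have one: "(1::nat) \<ge> 1" by simp
    have "mu (\<sigma> i) (\<sigma> j) \<in> arv Q 1" using q by (intro mu_arv) (unfold mpow_one1, simp)
    then obtain A where A: "A \<in> arv P 1" "V 1 A = mu (\<sigma> i) (\<sigma> j)"
      using ru_img[OF ru one] by (metis imageE)
    show "P i j > 0"
    proof (rule ccontr)
      assume "\<not> P i j > 0"
      then have "P i j = 0" using stoch_nonneg[OF sP, of i j] by simp
      then have "mpow P 1 i j = 0" unfolding mpow_one1 .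
      then have "A i j = 0" using A(1) by (auto simp: arv_def)
      then have "bimod (pj i) A (pj j) = (\<lambda>a b. 0 * A a b)"
        by (intro ext) (auto simp: bimod_def pj_def)
      then have "V 1 (bimod (pj i) A (pj j)) = (\<lambda>a b. 0)"
        using ru_smult[OF ru one A(1), of 0] by simp
      moreover have "V 1 (bimod (pj i) A (pj j)) = bimod (pj (\<sigma> i)) (mu (\<sigma> i) (\<sigma> j)) (pj (\<sigma> j))"
        using ru_bimod[OF ru one linf_pj[of i] linf_pj[of j] A(1)] A(2) rp[of i] rp[of j] by simp
      ultimately have e: "bimod (pj (\<sigma> i)) (mu (\<sigma> i) (\<sigma> j)) (pj (\<sigma> j)) = (\<lambda>a b. 0)"
        by simp
      from fun_cong[OF fun_cong[OF e, of "\<sigma> i"], of "\<sigma> j"]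
      have "bimod (pj (\<sigma> i)) (mu (\<sigma> i) (\<sigma> j)) (pj (\<sigma> j)) (\<sigma> i) (\<sigma> j) = 0" by simp
      then show False by (simp add: bimod_def pj_def mu_def)
    qed
  qed
  have ratio1: "mpow P n i j * mpow P m j k / mpow P (n + m) i k =
          mpow Q n (\<sigma> i) (\<sigma> j) * mpow Q m (\<sigma> j) (\<sigma> k) / mpow Q (n + m) (\<sigma> i) (\<sigma> k)"
    if n: "n \<ge> 1" and m: "m \<ge> 1" and pp: "mpow P n i j * mpow P m j k > 0" for n m i j k
  proof -
    have nm: "n + m \<ge> 1" using n by simp
    have a0: "mpow P n i j \<noteq> 0" and b0: "mpow P m j k \<noteq> 0" using pp by auto
    obtain c1 where c1: "cmod c1 = 1" "V n (mu i j) = (\<lambda>x y. c1 * mu (\<sigma> i) (\<sigma> j) x y)"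
      using V_mu[OF sa ru n a0] \<sigma>_def by fastforce
    obtain c2 where c2: "cmod c2 = 1" "V m (mu j k) = (\<lambda>x y. c2 * mu (\<sigma> j) (\<sigma> k) x y)"
      using V_mu[OF sa ru m b0] \<sigma>_def by fastforce
    define rP where "rP = flat (sqrt (mpow P (n+m) i k)) * (sqrt (mpow P n i j) * sqrt (mpow P m j k))"
    define rQ where "rQ = flat (sqrt (mpow Q (n+m) (\<sigma> i) (\<sigma> k))) *
                 (sqrt (mpow Q n (\<sigma> i) (\<sigma> j)) * sqrt (mpow Q m (\<sigma> j) (\<sigma> k)))"
    have mui: "\<And>a b. mu a b = (\<lambda>x y. 1 * mu a b x y)" by simp
    have UP: "Umap P n m (mu i j) (mu j k) = (\<lambda>x y. complex_of_real rP * mu i k x y)"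
      using Umap_mu[of P n m 1 i j 1 k] mui[of i j] mui[of j k] unfolding rP_def by simp
    have UQ: "Umap Q n m (V n (mu i j)) (V m (mu j k)) = (\<lambda>x y. complex_of_real rQ * (c1 * c2) * mu (\<sigma> i) (\<sigma> k) x y)"
      unfolding c1(2) c2(2) Umap_mu rQ_def ..
    have "\<exists>c3. cmod c3 = 1 \<and> V (n + m) (Umap P n m (mu i j) (mu j k)) (\<sigma> i) (\<sigma> k) = complex_of_real rP * c3"
    proof (cases "mpow P (n + m) i k = 0")
      case True
      then have "rP = 0" by (simp add: rP_def flat_def)
      then have "Umap P n m (mu i j) (mu j k) = (\<lambda>x y. 0)" using UP by simp
      then have "V (n + m) (Umap P n m (mu i j) (mu j k)) = (\<lambda>x y. 0)" using V_zero[OF ru nm] by simp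
      then show ?thesis using \<open>rP = 0\<close> by (intro exI[of _ 1]) simp
    next
      case False
      obtain c3 where c3: "cmod c3 = 1" "V (n+m) (mu i k) = (\<lambda>x y. c3 * mu (\<sigma> i) (\<sigma> k) x y)"
        using V_mu[OF sa ru nm False] \<sigma>_def by fastforce
      have "V (n + m) (Umap P n m (mu i j) (mu j k)) = (\<lambda>x y. complex_of_real rP * V (n+m) (mu i k) x y)"
        unfolding UP by (rule ru_smult[OF ru nm mu_arv[OF False]])
      then show ?thesis using c3 by (intro exI[of _ c3]) (simp add: mu_def)
    qed
    then obtain c3 where c3: "cmod c3 = 1"
      "V (n + m) (Umap P n m (mu i j) (mu j k)) (\<sigma> i) (\<sigma> k) = complex_of_real rP * c3" by blast
    have "complex_of_real rP * c3 = complex_of_real rQ * (c1 * c2)"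
      using c3(2) ru_U[OF ru n m mu_arv[OF a0] mu_arv[OF b0]] UQ by (simp add: mu_def)
    then have "cmod (complex_of_real rP * c3) = cmod (complex_of_real rQ * (c1 * c2))" by simp
    then have "\<bar>rP\<bar> = \<bar>rQ\<bar>" using c1(1) c2(1) c3(1) by (simp add: norm_mult)
    moreover have "rP \<ge> 0" unfolding rP_def
      by (intro mult_nonneg_nonneg) (simp_all add: flat_def mpow_nonneg[OF sP])
    moreover have "rQ \<ge> 0" unfolding rQ_def
      by (intro mult_nonneg_nonneg) (simp_all add: flat_def mpow_nonneg[OF sQ])
    ultimately have "rP = rQ" by simp
    moreover have "rP = sqrt (mpow P n i j * mpow P m j k / mpow P (n + m) i k)"
      unfolding rP_def by (rule flat_sqrt) (simp_all add: mpow_nonneg[OF sP])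
    moreover have "rQ = sqrt (mpow Q n (\<sigma> i) (\<sigma> j) * mpow Q m (\<sigma> j) (\<sigma> k) / mpow Q (n + m) (\<sigma> i) (\<sigma> k))"
      unfolding rQ_def by (rule flat_sqrt) (simp_all add: mpow_nonneg[OF sQ])
    ultimately show ?thesis by simp
  qed
  have ratio: "mpow P n i j * mpow P m j k / mpow P (n + m) i k =
          mpow Q n (\<sigma> i) (\<sigma> j) * mpow Q m (\<sigma> j) (\<sigma> k) / mpow Q (n + m) (\<sigma> i) (\<sigma> k)"
    if pp: "mpow P n i j * mpow P m j k > 0" for n m i j k
  proof (cases "n = 0")
    case True
    then have ij: "i = j" using pp by (simp split: if_splits)
    then have "mpow P m j k > 0" using pp True by simp
    then have "mpow Q m (\<sigma> j) (\<sigma> k) > 0" by (rule posPQ)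
    then show ?thesis using True ij \<open>mpow P m j k > 0\<close> by simp
  next
    case False
    show ?thesis
    proof (cases "m = 0")
      case True
      then have jk: "j = k" using pp by (simp split: if_splits)
      then have "mpow P n i j > 0" using pp True by simp
      then have "mpow Q n (\<sigma> i) (\<sigma> j) > 0" by (rule posPQ)
      then show ?thesis using True jk \<open>mpow P n i j > 0\<close> by simp
    next
      case False
      then show ?thesis using ratio1[OF _ _ pp] \<open>n \<noteq> 0\<close> by simp
    qed
  qed
  show ?thesis unfolding star_cond_def \<sigma>_def[symmetric] using bs pa ratio by blast
qed


theorem mainTheorem8:
  fixes P Q :: "'a::countable \<Rightarrow> 'a \<Rightarrow> real"
  assumes "stochastic P" and "stochastic Q"
  shows "(\<forall>\<rho> V. star_aut \<rho> \<and> rho_unitary_iso P Q \<rho> V \<longrightarrow> star_cond P Q (sigma_of \<rho>))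
       \<and> (\<forall>\<sigma>. star_cond P Q \<sigma> \<longrightarrow> (\<exists>V. rho_unitary_iso P Q (rho_of \<sigma>) V))"
proof (intro conjI allI impI)
  fix \<rho> V assume h: "star_aut \<rho> \<and> rho_unitary_iso P Q \<rho> V"
  then have h1: "star_aut \<rho>" and h2: "rho_unitary_iso P Q \<rho> V" by simp_all
  show "star_cond P Q (sigma_of \<rho>)" by (rule part1[OF assms h1 h2])
next
  fix \<sigma> assume "star_cond P Q \<sigma>"
  then show "\<exists>V. rho_unitary_iso P Q (rho_of \<sigma>) V" by (rule part2[OF assms])
qed

end
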